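(* Let $G_1=(\{p_j\},\{\mu_j\},\{\sigma_j^2\})_{j=1}^n$ and $G_2=(\{p'_k\},\{\mu'_k\},\{\sigma_k'^2\})_{k=1}^{n'}$ be univariate Gaussian mixtures with all $\sigma_j>0$, $\sigma'_k>0$. Then $$\begin{aligned}C_2^2(G_1,G_2)=&\sum_{j=1}^n\sum_{k=1}^{n'}p_jp'_k\sqrt{\sigma_j^2+\sigma_k'^2}\,\Big[U\Big(\tfrac{\mu_j-\mu'_k}{\sqrt{\sigma_j^2+\sigma_k'^2}}\Big)+U\Big(\tfrac{\mu'_k-\mu_j}{\sqrt{\sigma_j^2+\sigma_k'^2}}\Big)\Big]\\&-\sum_{j=1}^n\sum_{k=1}^n p_jp_k\sqrt{\sigma_j^2+\sigma_k^2}\,U\Big(\tfrac{\mu_j-\mu_k}{\sqrt{\sigma_j^2+\sigma_k^2}}\Big)-\sum_{j=1}^{n'}\sum_{k=1}^{n'}p'_jp'_k\sqrt{\sigma_j'^2+\sigma_k'^2}\,U\Big(\tfrac{\mu'_j-\mu'_k}{\sqrt{\sigma_j'^2+\sigma_k'^2}}\Big).\end{aligned}$$ Equivalently, with $V(x)=\frac{U(x)+U(-x)}{2}$, $$C_2^2(G_1,G_2)=2\sum_{j,k}p_jp'_k\sqrt{\sigma_j^2+\sigma_k'^2}\,V\Big(\tfrac{\mu_j-\mu'_k}{\sqrt{\sigma_j^2+\sigma_k'^2}}\Big)-\sum_{j,k=1}^n p_jp_k\sqrt{\sigma_j^2+\sigma_k^2}\,V\Big(\tfrac{\mu_j-\m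u_k}{\sqrt{\sigma_j^2+\sigma_k^2}}\Big)-\sum_{j,k=1}^{n'}p'_jp'_k\sqrt{\sigma_j'^2+\sigma_k'^2}\,V\Big(\tfrac{\mu'_j-\mu'_k}{\sqrt{\sigma_j'^2+\sigma_k'^2}}\Big).$$
   Context: A univariate Gaussian mixture $G=(\{p_j\},\{\mu_j\},\{\sigma_j^2\})_{j=1}^n$ has $p_j\ge0$, $\sum_jp_j=1$, $\mu_j\in\mathbb{R}$, and CDF $\mathrm{CDF}(G)(x)=\sum_j p_j\Phi((x-\mu_j)/\sigma_j)$, where $\Phi$ is the standard normal CDF. The Cramér 2-distance is $C_2(G_1,G_2)=\left(\int_{\mathbb{R}}|\mathrm{CDF}(G_1)(x)-\mathrm{CDF}(G_2)(x)|^2dx\right)^{1/2}$. $U(x)=x\Phi(x)+\frac{1}{\sqrt{2\pi}}e^{-x^2/2}$. *)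

theory Defs
  imports "HOL-Probability.Probability"
begin

definition Phi :: "real \<Rightarrow> real" where
  "Phi x = (\<integral>t\<in>{..x}. std_normal_density t \<partial>lborel)"

definition mixture_cdf :: "nat \<Rightarrow> (nat \<Rightarrow> real) \<Rightarrow> (nat \<Rightarrow> real) \<Rightarrow> (nat \<Rightarrow> real) \<Rightarrow> real \<Rightarrow> real" where
  "mixture_cdf n p mu sg x = (\<Sum>j<n. p j * Phi ((x - mu j) / sg j))"

definition cramer2 :: "(real \<Rightarrow> real) \<Rightarrow> (real \<Rightarrow> real) \<Rightarrow> real" where
  "cramer2 F1 F2 = sqrt (\<integral>x. \<bar>F1 x - F2 x\<bar> ^ 2 \<partial>lborel)"

definition U :: "real \<Rightarrow> real" where
  "U x = x * Phi x + exp (- (x ^ 2) / 2) / sqrt (2 * pi)"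

definition V :: "real \<Rightarrow> real" where
  "V x = (U x + U (- x)) / 2"

end

theory Submission
  imports Defs "HOL-Real_Asymp.Real_Asymp"
begin

lemma Phi_alt: "Phi x = (\<integral>t. std_normal_density t * indicator {..x} t \<partial>lborel)"
  unfolding Phi_def set_lebesgue_integral_def by (simp add: mult.commute)

lemma integrable_std_ind[simp]: "A \<in> sets borel \<Longrightarrow> integrable lborel (\<lambda>t. std_normal_density t * indicator A t)"
  using integrable_mult_indicator[of A lborel std_normal_density] by (simp add: mult.commute)

lemma Phi_nn: "ennreal (Phi x) = (\<integral>\<^sup>+t. ennreal (std_normal_density t * indicator {..x} t) \<partial>lborel)"
  unfolding Phi_alt by (subst nn_integral_eq_integral) auto

lemma Phi_nonneg: "0 \<le> Phi x"
  unfolding Phi_alt by (rule integral_nonneg_AE) auto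

lemma Phi_compl: "1 - Phi x = (\<integral>t. std_normal_density t * indicator {x<..} t \<partial>lborel)"
proof -
  have "(\<integral>t. std_normal_density t \<partial>lborel) = (\<integral>t. std_normal_density t * indicator {..x} t + std_normal_density t * indicator {x<..} t \<partial>lborel)"
    by (rule arg_cong[where f="lebesgue_integral lborel"]) (auto simp: fun_eq_iff split: split_indicator)
  also have "\<dots> = Phi x + (\<integral>t. std_normal_density t * indicator {x<..} t \<partial>lborel)"
    unfolding Phi_alt by (subst Bochner_Integration.integral_add) auto
  finally show ?thesis by simp
qed

lemma Phi_compl_nn: "ennreal (1 - Phi x) = (\<integral>\<^sup>+t. ennreal (std_normal_density t * indicator {x<..} t) \<partial>lborel)"
  unfolding Phi_compl by (subst nn_integral_eq_integral) auto

lemma Phi_le1: "Phi x \<le> 1"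
proof -
  have "0 \<le> 1 - Phi x" unfolding Phi_compl by (rule integral_nonneg_AE) auto
  thus ?thesis by simp
qed

lemma Phi_mono: "mono Phi"
proof
  fix x y :: real assume "x \<le> y"
  show "Phi x \<le> Phi y" unfolding Phi_alt
    by (rule integral_mono) (use \<open>x \<le> y\<close> in \<open>auto split: split_indicator\<close>)
qed

lemma Phi_measurable[measurable]: "Phi \<in> borel_measurable borel"
  using Phi_mono by (rule borel_measurable_mono)

lemma Phi_neg: "Phi (- x) = 1 - Phi x"
proof -
  have "Phi (-x) = \<bar>-1\<bar> *\<^sub>R (\<integral>t. std_normal_density (0 + -1 * t) * indicator {..-x} (0 + -1*t) \<partial>lborel)"
    unfolding Phi_alt by (rule lborel_integral_real_affine) simp
  also have "\<dots> = (\<integral>t. std_normal_density t * indicator {x..} t \<partial>lborel)"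
    apply simp apply (rule arg_cong[where f="lebesgue_integral lborel"]) by (auto simp: fun_eq_iff normal_density_def split: split_indicator)
  also have "\<dots> = (\<integral>t. std_normal_density t * indicator {x<..} t \<partial>lborel)"
    by (intro integral_cong_AE) (auto intro!: eventually_mono[OF AE_lborel_singleton[of x]] split: split_indicator)
  finally show ?thesis unfolding Phi_compl .
qed

lemma nd_affine: "0 < s \<Longrightarrow> normal_density m s (m + s * w) = std_normal_density w / s"
  by (simp add: normal_density_def real_sqrt_mult power_mult_distrib field_simps)

lemma nn_affine_nd:
  assumes s: "0 < s" and f[measurable]: "f \<in> borel_measurable borel"
  shows "(\<integral>\<^sup>+t. ennreal (normal_density m s t) * f t \<partial>lborel) = (\<integral>\<^sup>+w. ennreal (std_normal_density w) * f (m + s * w) \<partial>lborel)"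
proof -
  have "(\<integral>\<^sup>+t. ennreal (normal_density m s t) * f t \<partial>lborel) = ennreal \<bar>s\<bar> * (\<integral>\<^sup>+w. ennreal (normal_density m s (m + s * w)) * f (m + s * w) \<partial>lborel)"
    by (rule nn_integral_real_affine) (use s in auto)
  also have "\<dots> = (\<integral>\<^sup>+w. ennreal s * (ennreal (std_normal_density w / s) * f (m + s * w)) \<partial>lborel)"
    using s by (subst nn_integral_cmult) (auto simp: nd_affine)
  also have "\<dots> = (\<integral>\<^sup>+w. ennreal (std_normal_density w) * f (m + s * w) \<partial>lborel)"
    using s by (intro nn_integral_cong) (simp add: ennreal_mult'[symmetric] mult.assoc[symmetric])
  finally show ?thesis .
qed

lemma Phi_scaled_nn: "0 < s \<Longrightarrow> ennreal (Phi ((x - m) / s)) = (\<integral>\<^sup>+t. ennreal (normal_density m s t) * indicator {..x} t \<partial>lborel)"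
  apply (subst nn_affine_nd, simp, simp)
  apply (subst Phi_nn)
  apply (intro nn_integral_cong)
  apply (auto simp: field_simps split: split_indicator)
  done

lemma Phi_compl_scaled_nn: "0 < s \<Longrightarrow> ennreal (1 - Phi ((x - m) / s)) = (\<integral>\<^sup>+t. ennreal (normal_density m s t) * indicator {x<..} t \<partial>lborel)"
  apply (subst nn_affine_nd, simp, simp)
  apply (subst Phi_compl_nn)
  apply (intro nn_integral_cong)
  apply (auto simp: field_simps split: split_indicator)
  done

lemma conv_nd:
  assumes "0 < s1" "0 < s2"
  shows "(\<integral>\<^sup>+t. ennreal (normal_density m1 s1 t) * ennreal (normal_density m2 s2 (t + z)) \<partial>lborel)
     = ennreal (normal_density (m2 - m1) (sqrt (s1\<^sup>2 + s2\<^sup>2)) z)"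
proof -
  have "(\<integral>\<^sup>+t. ennreal (normal_density m1 s1 t) * ennreal (normal_density m2 s2 (t + z)) \<partial>lborel)
     = ennreal \<bar>1\<bar> * (\<integral>\<^sup>+y. ennreal (normal_density m1 s1 (m1 + 1 * y)) * ennreal (normal_density m2 s2 (m1 + 1 * y + z)) \<partial>lborel)"
    by (rule nn_integral_real_affine) auto
  also have "\<dots> = (\<integral>\<^sup>+y. ennreal (normal_density 0 s2 ((m2 - m1 - z) - y) * normal_density 0 s1 y) \<partial>lborel)"
    apply simp apply (intro nn_integral_cong)
    by (simp add: ennreal_mult'[symmetric] normal_density_def power2_commute algebra_simps)
  also have "\<dots> = ennreal (normal_density 0 (sqrt (s2\<^sup>2 + s1\<^sup>2)) (m2 - m1 - z))"
    using conv_normal_density_zero_mean[of s2 s1, OF assms(2,1)] by (simp add: fun_eq_iff)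
  also have "\<dots> = ennreal (normal_density (m2 - m1) (sqrt (s1\<^sup>2 + s2\<^sup>2)) z)"
    by (simp add: normal_density_def power2_commute add.commute)
  finally show ?thesis .
qed

lemma J_lemma: "(\<integral>w. indicator {c<..} w * (w * std_normal_density w) \<partial>lborel) = std_normal_density c"
proof -
  have "(LBINT w=ereal c..\<infinity>. w * std_normal_density w) = 0 - (- std_normal_density c)"
  proof (rule interval_integral_FTC_integrable)
    show "ereal c < \<infinity>" by simp
    fix x assume "ereal c < ereal x" "ereal x < \<infinity>"
    have sq: "sqrt (pi * 2) * sqrt (pi * 2) = pi * 2" by simp
    show "((\<lambda>w. - std_normal_density w) has_vector_derivative x * std_normal_density x) (at x)"
      using sq unfolding has_real_derivative_iff_has_vector_derivative[symmetric] std_normal_density_def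
      apply (auto intro!: derivative_eq_intros simp: field_simps) done
    show "isCont (\<lambda>w. w * std_normal_density w) x"
      unfolding std_normal_density_def by (intro continuous_intros) auto
  next
    have "integrable lborel (\<lambda>w. std_normal_density w * w)"
      using integrable_std_normal_moment[of 1] by simp
    then show "set_integrable lborel (einterval (ereal c) \<infinity>) (\<lambda>w. w * std_normal_density w)"
      unfolding set_integrable_def
      by (intro integrable_mult_indicator) (auto simp: mult.commute)
  next
    show "(((\<lambda>w. - std_normal_density w) \<circ> real_of_ereal) \<longlongrightarrow> - std_normal_density c) (at_right (ereal c))"
      unfolding ereal_tendsto_simps1 std_normal_density_def
      by (intro tendsto_intros continuous_intros tendsto_within_open) auto
  next
    have "((\<lambda>w::real. - (1 / sqrt (2 * pi) * exp (- w\<^sup>2 / 2))) \<longlongrightarrow> 0) at_top"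
      by real_asymp
    then show "(((\<lambda>w. - std_normal_density w) \<circ> real_of_ereal) \<longlongrightarrow> 0) (at_left \<infinity>)"
      unfolding ereal_tendsto_simps1 std_normal_density_def by simp
  qed
  then show ?thesis
    by (simp add: interval_integral_Ioi set_lebesgue_integral_def)
qed

lemma Kl_full: "(\<integral>\<^sup>+w. ennreal (std_normal_density w) * ennreal (max 0 (a + w)) \<partial>lborel) = ennreal (U a) \<and> 0 \<le> U a"
proof -
  let ?h = "\<lambda>w. indicator {-a<..} w * (a * std_normal_density w) + indicator {-a<..} w * (w * std_normal_density w)"
  have int1: "integrable lborel (\<lambda>w. indicator {-a<..} w * (a * std_normal_density w))"
    using integrable_std_ind[of "{-a<..}"] by (simp add: ac_simps)
  have "integrable lborel (\<lambda>w. std_normal_density w * w)"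
    using integrable_std_normal_moment[of 1] by simp
  then have int2: "integrable lborel (\<lambda>w. indicator {-a<..} w * (w * std_normal_density w))"
    using integrable_mult_indicator[of "{-a<..}" lborel "\<lambda>w. std_normal_density w * w"] by (simp add: ac_simps)
  have eq: "\<And>w. ennreal (std_normal_density w) * ennreal (max 0 (a + w)) = ennreal (?h w)"
    by (auto simp: ennreal_mult'[symmetric] ennreal_eq_0_iff split: split_indicator simp: algebra_simps)
  have "(\<integral>w. ?h w \<partial>lborel) = a * (1 - Phi (-a)) + std_normal_density (-a)"
    apply (subst Bochner_Integration.integral_add[OF int1 int2])
    apply (subst J_lemma)
    apply (subst Phi_compl)
    apply (subst integral_mult_right_zero[symmetric])
    apply (simp add: ac_simps)
    done
  also have "\<dots> = U a"
    by (simp add: Phi_neg U_def std_normal_density_def)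
  finally have I: "(\<integral>w. ?h w \<partial>lborel) = U a" .
  have hnn: "\<And>w. 0 \<le> ?h w"
  proof -
    fix w
    have "0 \<le> std_normal_density w * (a + w)" if "-a < w" using that by simp
    then show "0 \<le> ?h w" by (auto split: split_indicator simp: algebra_simps)
  qed
  have nn: "0 \<le> U a" unfolding I[symmetric] by (rule integral_nonneg_AE) (use hnn in auto)
  show ?thesis
    unfolding eq
    using nn_integral_eq_integrable[of ?h lborel "U a"] int1 int2 I nn hnn
    by simp
qed

lemma Kl: "(\<integral>\<^sup>+w. ennreal (std_normal_density w) * ennreal (max 0 (a + w)) \<partial>lborel) = ennreal (U a)"
  using Kl_full by blast

lemma U_nonneg: "0 \<le> U a"
  using Kl_full by blast

lemma E_pos:
  assumes s: "0 < s"
  shows "(\<integral>\<^sup>+z. ennreal (normal_density d s z) * ennreal (max 0 z) \<partial>lborel) = ennreal (s * U (d / s))"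
proof -
  have "(\<integral>\<^sup>+z. ennreal (normal_density d s z) * ennreal (max 0 z) \<partial>lborel)
      = (\<integral>\<^sup>+w. ennreal (std_normal_density w) * ennreal (max 0 (d + s * w)) \<partial>lborel)"
    using s by (rule nn_affine_nd) simp
  also have "\<dots> = (\<integral>\<^sup>+w. ennreal s * (ennreal (std_normal_density w) * ennreal (max 0 (d / s + w))) \<partial>lborel)"
  proof (intro nn_integral_cong)
    fix w
    have e: "d + s * w = s * (d / s + w)" using s by (simp add: field_simps)
    have "max 0 (d + s * w) = s * max 0 (d / s + w)"
      unfolding e using s by (auto simp: max_def mult_le_0_iff zero_le_mult_iff)
    then have "ennreal (max 0 (d + s * w)) = ennreal s * ennreal (max 0 (d / s + w))"
      using s by (simp only: ennreal_mult')
    then show "ennreal (std_normal_density w) * ennreal (max 0 (d + s * w)) = ennreal s * (ennreal (std_normal_density w) * ennreal (max 0 (d / s + w)))"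
      by (metis mult.left_commute)
  qed
  also have "\<dots> = ennreal s * ennreal (U (d / s))"
    using Kl[of "d / s"] by (subst nn_integral_cmult) auto
  also have "\<dots> = ennreal (s * U (d / s))"
    using s by (simp add: ennreal_mult')
  finally show ?thesis .
qed

lemma B_nn:
  assumes s1: "0 < s1" and s2: "0 < s2"
  shows "(\<integral>\<^sup>+x. ennreal (Phi ((x - m1) / s1) * (1 - Phi ((x - m2) / s2))) \<partial>lborel)
    = ennreal (sqrt (s1\<^sup>2 + s2\<^sup>2) * U ((m2 - m1) / sqrt (s1\<^sup>2 + s2\<^sup>2)))"
proof -
  define f1 where "f1 = normal_density m1 s1"
  define f2 where "f2 = normal_density m2 s2"
  have [measurable]: "f1 \<in> borel_measurable borel" "f2 \<in> borel_measurable borel"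
    unfolding f1_def f2_def by simp_all
  have "(\<integral>\<^sup>+x. ennreal (Phi ((x - m1) / s1) * (1 - Phi ((x - m2) / s2))) \<partial>lborel)
     = (\<integral>\<^sup>+x. (\<integral>\<^sup>+t. ennreal (f1 t) * indicator {..x} t \<partial>lborel) * (\<integral>\<^sup>+u. ennreal (f2 u) * indicator {x<..} u \<partial>lborel) \<partial>lborel)"
    by (intro nn_integral_cong)
       (simp add: ennreal_mult Phi_nonneg Phi_le1 Phi_scaled_nn[OF s1] Phi_compl_scaled_nn[OF s2] f1_def f2_def)
  also have "\<dots> = (\<integral>\<^sup>+x. \<integral>\<^sup>+t. \<integral>\<^sup>+u. (if t \<le> x \<and> x < u then ennreal (f1 t * f2 u) else 0) \<partial>lborel \<partial>lborel \<partial>lborel)"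
  proof (intro nn_integral_cong)
    fix x
    have "(\<integral>\<^sup>+t. ennreal (f1 t) * indicator {..x} t \<partial>lborel) * (\<integral>\<^sup>+u. ennreal (f2 u) * indicator {x<..} u \<partial>lborel)
      = (\<integral>\<^sup>+t. ennreal (f1 t) * indicator {..x} t * (\<integral>\<^sup>+u. ennreal (f2 u) * indicator {x<..} u \<partial>lborel) \<partial>lborel)"
      by (rule nn_integral_multc[symmetric]) simp
    also have "\<dots> = (\<integral>\<^sup>+t. \<integral>\<^sup>+u. ennreal (f1 t) * indicator {..x} t * (ennreal (f2 u) * indicator {x<..} u) \<partial>lborel \<partial>lborel)"
      by (intro nn_integral_cong nn_integral_cmult[symmetric]) simp
    also have "\<dots> = (\<integral>\<^sup>+t. \<integral>\<^sup>+u. (if t \<le> x \<and> x < u then ennreal (f1 t * f2 u) else 0) \<partial>lborel \<partial>lborel)"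
      by (intro nn_integral_cong) (auto simp: ennreal_mult' f1_def split: split_indicator)
    finally show "(\<integral>\<^sup>+t. ennreal (f1 t) * indicator {..x} t \<partial>lborel) * (\<integral>\<^sup>+u. ennreal (f2 u) * indicator {x<..} u \<partial>lborel)
      = (\<integral>\<^sup>+t. \<integral>\<^sup>+u. (if t \<le> x \<and> x < u then ennreal (f1 t * f2 u) else 0) \<partial>lborel \<partial>lborel)" .
  qed
  also have "\<dots> = (\<integral>\<^sup>+t. \<integral>\<^sup>+x. \<integral>\<^sup>+u. (if t \<le> x \<and> x < u then ennreal (f1 t * f2 u) else 0) \<partial>lborel \<partial>lborel \<partial>lborel)"
    by (rule lborel_pair.Fubini') simp
  also have "\<dots> = (\<integral>\<^sup>+t. \<integral>\<^sup>+u. \<integral>\<^sup>+x. (if t \<le> x \<and> x < u then ennreal (f1 t * f2 u) else 0) \<partial>lborel \<partial>lborel \<partial>lborel)"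
    by (intro nn_integral_cong lborel_pair.Fubini') simp
  also have "\<dots> = (\<integral>\<^sup>+t. \<integral>\<^sup>+u. ennreal (f1 t) * ennreal (f2 u) * ennreal (max 0 (u - t)) \<partial>lborel \<partial>lborel)"
  proof (intro nn_integral_cong)
    fix t u :: real
    have "(\<integral>\<^sup>+x. (if t \<le> x \<and> x < u then ennreal (f1 t * f2 u) else 0) \<partial>lborel)
        = (\<integral>\<^sup>+x. ennreal (f1 t * f2 u) * indicator {t..<u} x \<partial>lborel)"
      by (intro nn_integral_cong) (auto split: split_indicator)
    also have "\<dots> = ennreal (f1 t * f2 u) * emeasure lborel {t..<u}"
      by (rule nn_integral_cmult_indicator) simp
    also have "\<dots> = ennreal (f1 t) * ennreal (f2 u) * ennreal (max 0 (u - t))"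
      by (cases "t \<le> u") (auto simp: ennreal_mult f1_def f2_def max_def)
    finally show "(\<integral>\<^sup>+x. (if t \<le> x \<and> x < u then ennreal (f1 t * f2 u) else 0) \<partial>lborel)
        = ennreal (f1 t) * ennreal (f2 u) * ennreal (max 0 (u - t))" .
  qed
  also have "\<dots> = (\<integral>\<^sup>+t. \<integral>\<^sup>+z. ennreal (f1 t) * ennreal (f2 (t + z)) * ennreal (max 0 z) \<partial>lborel \<partial>lborel)"
  proof (rule nn_integral_cong)
    fix t
    show "(\<integral>\<^sup>+u. ennreal (f1 t) * ennreal (f2 u) * ennreal (max 0 (u - t)) \<partial>lborel)
      = (\<integral>\<^sup>+z. ennreal (f1 t) * ennreal (f2 (t + z)) * ennreal (max 0 z) \<partial>lborel)"
      using nn_integral_real_affine[of "\<lambda>u. ennreal (f1 t) * ennreal (f2 u) * ennreal (max 0 (u - t))" 1 t]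
      by simp
  qed
  also have "\<dots> = (\<integral>\<^sup>+z. \<integral>\<^sup>+t. ennreal (f1 t) * ennreal (f2 (t + z)) * ennreal (max 0 z) \<partial>lborel \<partial>lborel)"
    by (rule lborel_pair.Fubini'[symmetric]) simp
  also have "\<dots> = (\<integral>\<^sup>+z. (\<integral>\<^sup>+t. ennreal (f1 t) * ennreal (f2 (t + z)) \<partial>lborel) * ennreal (max 0 z) \<partial>lborel)"
    by (intro nn_integral_cong nn_integral_multc) simp
  also have "\<dots> = (\<integral>\<^sup>+z. ennreal (normal_density (m2 - m1) (sqrt (s1\<^sup>2 + s2\<^sup>2)) z) * ennreal (max 0 z) \<partial>lborel)"
    unfolding f1_def f2_def conv_nd[OF s1 s2] ..
  also have "\<dots> = ennreal (sqrt (s1\<^sup>2 + s2\<^sup>2) * U ((m2 - m1) / sqrt (s1\<^sup>2 + s2\<^sup>2)))"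
    by (rule E_pos) (use s1 in \<open>simp add: add_pos_nonneg\<close>)
  finally show ?thesis .
qed

lemma B_real:
  assumes s1: "0 < s1" and s2: "0 < s2"
  shows "integrable lborel (\<lambda>x. Phi ((x - m1) / s1) * (1 - Phi ((x - m2) / s2)))
    \<and> (\<integral>x. Phi ((x - m1) / s1) * (1 - Phi ((x - m2) / s2)) \<partial>lborel)
       = sqrt (s1\<^sup>2 + s2\<^sup>2) * U ((m2 - m1) / sqrt (s1\<^sup>2 + s2\<^sup>2))"
proof -
  have nnv: "0 \<le> sqrt (s1\<^sup>2 + s2\<^sup>2) * U ((m2 - m1) / sqrt (s1\<^sup>2 + s2\<^sup>2))"
    by (intro mult_nonneg_nonneg U_nonneg) simp
  have ae: "AE x in lborel. 0 \<le> Phi ((x - m1) / s1) * (1 - Phi ((x - m2) / s2))"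
    by (intro AE_I2 mult_nonneg_nonneg) (simp_all add: Phi_nonneg Phi_le1)
  have m: "(\<lambda>x. Phi ((x - m1) / s1) * (1 - Phi ((x - m2) / s2))) \<in> borel_measurable lborel"
    by measurable
  show ?thesis
    using nn_integral_eq_integrable[OF m ae nnv] B_nn[OF s1 s2, of m1 m2]
    by simp
qed

lemma cross:
  fixes n n' :: nat and p mu sg p' mu' sg' :: "nat \<Rightarrow> real"
  assumes sg: "\<And>j. j < n \<Longrightarrow> sg j > 0" and sg': "\<And>k. k < n' \<Longrightarrow> sg' k > 0"
    and p': "(\<Sum>k<n'. p' k) = 1"
  shows "integrable lborel (\<lambda>x. mixture_cdf n p mu sg x * (1 - mixture_cdf n' p' mu' sg' x))
    \<and> (\<integral>x. mixture_cdf n p mu sg x * (1 - mixture_cdf n' p' mu' sg' x) \<partial>lborel)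
      = (\<Sum>j<n. \<Sum>k<n'. p j * p' k * (sqrt (sg j ^ 2 + sg' k ^ 2) * U ((mu' k - mu j) / sqrt (sg j ^ 2 + sg' k ^ 2))))"
proof -
  have eq: "(\<lambda>x. mixture_cdf n p mu sg x * (1 - mixture_cdf n' p' mu' sg' x))
    = (\<lambda>x. \<Sum>j<n. \<Sum>k<n'. p j * p' k * (Phi ((x - mu j) / sg j) * (1 - Phi ((x - mu' k) / sg' k))))"
  proof
    fix x
    have "1 - mixture_cdf n' p' mu' sg' x = (\<Sum>k<n'. p' k * (1 - Phi ((x - mu' k) / sg' k)))"
    proof -
      have "1 - mixture_cdf n' p' mu' sg' x = (\<Sum>k<n'. p' k) - (\<Sum>k<n'. p' k * Phi ((x - mu' k) / sg' k))"
        unfolding mixture_cdf_def p' ..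
      also have "\<dots> = (\<Sum>k<n'. p' k * (1 - Phi ((x - mu' k) / sg' k)))"
        by (simp add: sum_subtractf[symmetric] right_diff_distrib)
      finally show ?thesis .
    qed
    then show "mixture_cdf n p mu sg x * (1 - mixture_cdf n' p' mu' sg' x)
      = (\<Sum>j<n. \<Sum>k<n'. p j * p' k * (Phi ((x - mu j) / sg j) * (1 - Phi ((x - mu' k) / sg' k))))"
      unfolding mixture_cdf_def by (simp add: sum_product ac_simps)
  qed
  have I: "integrable lborel (\<lambda>x. p j * p' k * (Phi ((x - mu j) / sg j) * (1 - Phi ((x - mu' k) / sg' k))))
    \<and> (\<integral>x. p j * p' k * (Phi ((x - mu j) / sg j) * (1 - Phi ((x - mu' k) / sg' k))) \<partial>lborel)
      = p j * p' k * (sqrt (sg j ^ 2 + sg' k ^ 2) * U ((mu' k - mu j) / sqrt (sg j ^ 2 + sg' k ^ 2)))"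
    if "j < n" "k < n'" for j k
    using B_real[OF sg[OF that(1)] sg'[OF that(2)], of "mu j" "mu' k"] by simp
  have I2: "integrable lborel (\<lambda>x. \<Sum>k<n'. p j * p' k * (Phi ((x - mu j) / sg j) * (1 - Phi ((x - mu' k) / sg' k))))
    \<and> (\<integral>x. (\<Sum>k<n'. p j * p' k * (Phi ((x - mu j) / sg j) * (1 - Phi ((x - mu' k) / sg' k)))) \<partial>lborel)
      = (\<Sum>k<n'. p j * p' k * (sqrt (sg j ^ 2 + sg' k ^ 2) * U ((mu' k - mu j) / sqrt (sg j ^ 2 + sg' k ^ 2))))"
    if "j < n" for j
  proof
    show "integrable lborel (\<lambda>x. \<Sum>k<n'. p j * p' k * (Phi ((x - mu j) / sg j) * (1 - Phi ((x - mu' k) / sg' k))))"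
      by (rule Bochner_Integration.integrable_sum) (use I[OF that] in blast)
    have "(\<integral>x. (\<Sum>k<n'. p j * p' k * (Phi ((x - mu j) / sg j) * (1 - Phi ((x - mu' k) / sg' k)))) \<partial>lborel)
      = (\<Sum>k<n'. (\<integral>x. p j * p' k * (Phi ((x - mu j) / sg j) * (1 - Phi ((x - mu' k) / sg' k))) \<partial>lborel))"
      by (rule Bochner_Integration.integral_sum) (use I[OF that] in blast)
    also have "\<dots> = (\<Sum>k<n'. p j * p' k * (sqrt (sg j ^ 2 + sg' k ^ 2) * U ((mu' k - mu j) / sqrt (sg j ^ 2 + sg' k ^ 2))))"
      by (rule sum.cong) (use I[OF that] in auto)
    finally show "(\<integral>x. (\<Sum>k<n'. p j * p' k * (Phi ((x - mu j) / sg j) * (1 - Phi ((x - mu' k) / sg' k)))) \<partial>lborel)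
      = (\<Sum>k<n'. p j * p' k * (sqrt (sg j ^ 2 + sg' k ^ 2) * U ((mu' k - mu j) / sqrt (sg j ^ 2 + sg' k ^ 2))))" .
  qed
  show ?thesis
    unfolding eq
  proof
    show "integrable lborel (\<lambda>x. \<Sum>j<n. \<Sum>k<n'. p j * p' k * (Phi ((x - mu j) / sg j) * (1 - Phi ((x - mu' k) / sg' k))))"
      by (rule Bochner_Integration.integrable_sum) (use I2 in blast)
    have "(\<integral>x. (\<Sum>j<n. \<Sum>k<n'. p j * p' k * (Phi ((x - mu j) / sg j) * (1 - Phi ((x - mu' k) / sg' k)))) \<partial>lborel)
      = (\<Sum>j<n. (\<integral>x. (\<Sum>k<n'. p j * p' k * (Phi ((x - mu j) / sg j) * (1 - Phi ((x - mu' k) / sg' k)))) \<partial>lborel))"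
      by (rule Bochner_Integration.integral_sum) (use I2 in blast)
    also have "\<dots> = (\<Sum>j<n. \<Sum>k<n'. p j * p' k * (sqrt (sg j ^ 2 + sg' k ^ 2) * U ((mu' k - mu j) / sqrt (sg j ^ 2 + sg' k ^ 2))))"
      by (rule sum.cong) (use I2 in auto)
    finally show "(\<integral>x. (\<Sum>j<n. \<Sum>k<n'. p j * p' k * (Phi ((x - mu j) / sg j) * (1 - Phi ((x - mu' k) / sg' k)))) \<partial>lborel)
      = (\<Sum>j<n. \<Sum>k<n'. p j * p' k * (sqrt (sg j ^ 2 + sg' k ^ 2) * U ((mu' k - mu j) / sqrt (sg j ^ 2 + sg' k ^ 2))))" .
  qed
qed

lemma self_swap:
  "(\<Sum>j<n. \<Sum>k<n. p j * p k * (sqrt (sg j ^ 2 + sg k ^ 2) * U ((mu k - mu j) / sqrt (sg j ^ 2 + sg k ^ 2))))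
   = (\<Sum>j<n. \<Sum>k<n. p j * p k * sqrt (sg j ^ 2 + sg k ^ 2) * U ((mu j - mu k) / sqrt (sg j ^ 2 + sg k ^ 2)))"
  by (subst sum.swap) (simp add: ac_simps)

lemma cross_swap:
  "(\<Sum>k<n'. \<Sum>j<n. p' k * p j * (sqrt (sg' k ^ 2 + sg j ^ 2) * U ((mu j - mu' k) / sqrt (sg' k ^ 2 + sg j ^ 2))))
   = (\<Sum>j<n. \<Sum>k<n'. p j * p' k * sqrt (sg j ^ 2 + sg' k ^ 2) * U ((mu j - mu' k) / sqrt (sg j ^ 2 + sg' k ^ 2)))"
  by (subst sum.swap) (simp add: ac_simps)

lemma self_V:
  "(\<Sum>j<n. \<Sum>k<n. p j * p k * sqrt (sg j ^ 2 + sg k ^ 2) * V ((mu j - mu k) / sqrt (sg j ^ 2 + sg k ^ 2)))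
   = (\<Sum>j<n. \<Sum>k<n. p j * p k * sqrt (sg j ^ 2 + sg k ^ 2) * U ((mu j - mu k) / sqrt (sg j ^ 2 + sg k ^ 2)))"
proof -
  have e: "\<And>j k. - ((mu j - mu k) / sqrt (sg j ^ 2 + sg k ^ 2)) = (mu k - mu j) / sqrt (sg j ^ 2 + sg k ^ 2)"
    by (simp add: minus_divide_left)
  have "(\<Sum>j<n. \<Sum>k<n. p j * p k * sqrt (sg j ^ 2 + sg k ^ 2) * V ((mu j - mu k) / sqrt (sg j ^ 2 + sg k ^ 2)))
    = ((\<Sum>j<n. \<Sum>k<n. p j * p k * sqrt (sg j ^ 2 + sg k ^ 2) * U ((mu j - mu k) / sqrt (sg j ^ 2 + sg k ^ 2)))
      + (\<Sum>j<n. \<Sum>k<n. p j * p k * (sqrt (sg j ^ 2 + sg k ^ 2) * U ((mu k - mu j) / sqrt (sg j ^ 2 + sg k ^ 2))))) / 2"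
    unfolding V_def e by (simp add: sum.distrib sum_divide_distrib algebra_simps add_divide_distrib)
  then show ?thesis unfolding self_swap by simp
qed

theorem mainTheorem4:
  fixes n n' :: nat and p mu sg p' mu' sg' :: "nat \<Rightarrow> real"
  assumes "\<And>j. j < n \<Longrightarrow> p j \<ge> 0" and "(\<Sum>j<n. p j) = 1"
    and "\<And>j. j < n \<Longrightarrow> sg j > 0"
    and "\<And>k. k < n' \<Longrightarrow> p' k \<ge> 0" and "(\<Sum>k<n'. p' k) = 1"
    and "\<And>k. k < n' \<Longrightarrow> sg' k > 0"
  shows "(cramer2 (mixture_cdf n p mu sg) (mixture_cdf n' p' mu' sg')) ^ 2 =
      (\<Sum>j<n. \<Sum>k<n'. p j * p' k * sqrt (sg j ^ 2 + sg' k ^ 2) *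
          (U ((mu j - mu' k) / sqrt (sg j ^ 2 + sg' k ^ 2))
           + U ((mu' k - mu j) / sqrt (sg j ^ 2 + sg' k ^ 2))))
    - (\<Sum>j<n. \<Sum>k<n. p j * p k * sqrt (sg j ^ 2 + sg k ^ 2) *
          U ((mu j - mu k) / sqrt (sg j ^ 2 + sg k ^ 2)))
    - (\<Sum>j<n'. \<Sum>k<n'. p' j * p' k * sqrt (sg' j ^ 2 + sg' k ^ 2) *
          U ((mu' j - mu' k) / sqrt (sg' j ^ 2 + sg' k ^ 2)))
   \<and> (cramer2 (mixture_cdf n p mu sg) (mixture_cdf n' p' mu' sg')) ^ 2 =
      2 * (\<Sum>j<n. \<Sum>k<n'. p j * p' k * sqrt (sg j ^ 2 + sg' k ^ 2) *
          V ((mu j - mu' k) / sqrt (sg j ^ 2 + sg' k ^ 2)))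
    - (\<Sum>j<n. \<Sum>k<n. p j * p k * sqrt (sg j ^ 2 + sg k ^ 2) *
          V ((mu j - mu k) / sqrt (sg j ^ 2 + sg k ^ 2)))
    - (\<Sum>j<n'. \<Sum>k<n'. p' j * p' k * sqrt (sg' j ^ 2 + sg' k ^ 2) *
          V ((mu' j - mu' k) / sqrt (sg' j ^ 2 + sg' k ^ 2)))"
proof -
  note a = assms
  define F1 where "F1 = mixture_cdf n p mu sg"
  define F2 where "F2 = mixture_cdf n' p' mu' sg'"
  note c12 = cross[where n=n and sg=sg and n'=n' and sg'=sg' and p'=p' and p=p and mu=mu and mu'=mu', OF a(3) a(6) a(5)]
  note c21 = cross[where n=n' and sg=sg' and n'=n and sg'=sg and p'=p and p=p' and mu=mu' and mu'=mu, OF a(6) a(3) a(2)]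
  note c11 = cross[where n=n and sg=sg and n'=n and sg'=sg and p'=p and p=p and mu=mu and mu'=mu, OF a(3) a(3) a(2)]
  note c22 = cross[where n=n' and sg=sg' and n'=n' and sg'=sg' and p'=p' and p=p' and mu=mu' and mu'=mu', OF a(6) a(6) a(5)]
  have pw: "\<And>x. \<bar>F1 x - F2 x\<bar> ^ 2 = F1 x * (1 - F2 x) + F2 x * (1 - F1 x) - F1 x * (1 - F1 x) - F2 x * (1 - F2 x)"
    by (simp add: power2_eq_square algebra_simps)
  have I: "(\<integral>x. \<bar>F1 x - F2 x\<bar> ^ 2 \<partial>lborel) =
     (\<integral>x. F1 x * (1 - F2 x) \<partial>lborel) + (\<integral>x. F2 x * (1 - F1 x) \<partial>lborel)
     - (\<integral>x. F1 x * (1 - F1 x) \<partial>lborel) - (\<integral>x. F2 x * (1 - F2 x) \<partial>lborel)"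
    unfolding pw using c12 c21 c11 c22 unfolding F1_def F2_def
    by (simp add: Bochner_Integration.integral_diff Bochner_Integration.integral_add)
  have nn: "0 \<le> (\<integral>x. \<bar>F1 x - F2 x\<bar> ^ 2 \<partial>lborel)"
    by (rule integral_nonneg_AE) simp
  have C: "(cramer2 (mixture_cdf n p mu sg) (mixture_cdf n' p' mu' sg')) ^ 2 =
     (\<Sum>j<n. \<Sum>k<n'. p j * p' k * (sqrt (sg j ^ 2 + sg' k ^ 2) * U ((mu' k - mu j) / sqrt (sg j ^ 2 + sg' k ^ 2))))
   + (\<Sum>j<n. \<Sum>k<n'. p j * p' k * sqrt (sg j ^ 2 + sg' k ^ 2) * U ((mu j - mu' k) / sqrt (sg j ^ 2 + sg' k ^ 2)))
   - (\<Sum>j<n. \<Sum>k<n. p j * p k * sqrt (sg j ^ 2 + sg k ^ 2) * U ((mu j - mu k) / sqrt (sg j ^ 2 + sg k ^ 2)))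
   - (\<Sum>j<n'. \<Sum>k<n'. p' j * p' k * sqrt (sg' j ^ 2 + sg' k ^ 2) * U ((mu' j - mu' k) / sqrt (sg' j ^ 2 + sg' k ^ 2)))"
  proof -
    have "(cramer2 (mixture_cdf n p mu sg) (mixture_cdf n' p' mu' sg')) ^ 2 = (\<integral>x. \<bar>F1 x - F2 x\<bar> ^ 2 \<partial>lborel)"
      unfolding cramer2_def F1_def[symmetric] F2_def[symmetric] using nn by simp
    also have "\<dots> = (\<Sum>j<n. \<Sum>k<n'. p j * p' k * (sqrt (sg j ^ 2 + sg' k ^ 2) * U ((mu' k - mu j) / sqrt (sg j ^ 2 + sg' k ^ 2))))
     + (\<Sum>k<n'. \<Sum>j<n. p' k * p j * (sqrt (sg' k ^ 2 + sg j ^ 2) * U ((mu j - mu' k) / sqrt (sg' k ^ 2 + sg j ^ 2))))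
     - (\<Sum>j<n. \<Sum>k<n. p j * p k * (sqrt (sg j ^ 2 + sg k ^ 2) * U ((mu k - mu j) / sqrt (sg j ^ 2 + sg k ^ 2))))
     - (\<Sum>j<n'. \<Sum>k<n'. p' j * p' k * (sqrt (sg' j ^ 2 + sg' k ^ 2) * U ((mu' k - mu' j) / sqrt (sg' j ^ 2 + sg' k ^ 2))))"
      unfolding I using c12 c21 c11 c22 unfolding F1_def F2_def by simp
    finally show ?thesis unfolding cross_swap self_swap .
  qed
  have e: "\<And>j k. - ((mu j - mu' k) / sqrt (sg j ^ 2 + sg' k ^ 2)) = (mu' k - mu j) / sqrt (sg j ^ 2 + sg' k ^ 2)"
    by (simp add: minus_divide_left)
  have D: "2 * (\<Sum>j<n. \<Sum>k<n'. p j * p' k * sqrt (sg j ^ 2 + sg' k ^ 2) * V ((mu j - mu' k) / sqrt (sg j ^ 2 + sg' k ^ 2)))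
    = (\<Sum>j<n. \<Sum>k<n'. p j * p' k * (sqrt (sg j ^ 2 + sg' k ^ 2) * U ((mu' k - mu j) / sqrt (sg j ^ 2 + sg' k ^ 2))))
   + (\<Sum>j<n. \<Sum>k<n'. p j * p' k * sqrt (sg j ^ 2 + sg' k ^ 2) * U ((mu j - mu' k) / sqrt (sg j ^ 2 + sg' k ^ 2)))"
    unfolding sum_distrib_left sum.distrib[symmetric] V_def e by (intro sum.cong refl) (simp add: field_simps)
  have D2: "(\<Sum>j<n. \<Sum>k<n'. p j * p' k * sqrt (sg j ^ 2 + sg' k ^ 2) *
          (U ((mu j - mu' k) / sqrt (sg j ^ 2 + sg' k ^ 2))
           + U ((mu' k - mu j) / sqrt (sg j ^ 2 + sg' k ^ 2))))
    = (\<Sum>j<n. \<Sum>k<n'. p j * p' k * (sqrt (sg j ^ 2 + sg' k ^ 2) * U ((mu' k - mu j) / sqrt (sg j ^ 2 + sg' k ^ 2))))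
   + (\<Sum>j<n. \<Sum>k<n'. p j * p' k * sqrt (sg j ^ 2 + sg' k ^ 2) * U ((mu j - mu' k) / sqrt (sg j ^ 2 + sg' k ^ 2)))"
    by (simp add: sum.distrib[symmetric] algebra_simps)
  show ?thesis
    unfolding self_V D D2 C by simp
qed

end
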